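(* $\mathfrak{ss}_{ac}=\mathfrak d$ and dually $\mathfrak{ss}_{ac}^\perp=\mathfrak b$.
   Context: Let $\mathfrak S$ be the set of all sequences $\mathbf a=\langle a_i:i\in\omega\rangle$ of rational numbers with $a_i\to 0$. Let $[\omega]^\omega_\omega$ denote the set of infinite coinfinite subsets of $\omega$. For infinite $X\subseteq\omega$ with increasing enumeration $\langle i_n\rangle$ write $\sum_X\mathbf a$ for $\sum_n a_{i_n}$. A series is convergent if its partial sums converge to a real number; it is conditional if $\sum_{\{i:a_i>0\}}\mathbf a=\infty$ and $\sum_{\{i:a_i<0\}}\mathbf a=-\infty$; conditionally convergent if convergent and conditional; absolutely convergent if convergent and not conditional. Let $\mathfrak S_{cc}$ be the set of $\mathbf a\in\mathfrak S$ with $\sum\mathbf a$ conditionally convergent. $\mathfrak{ss}_{ac}$ is the least cardinality of a family $\mathcal X\subseteq[\omega]^\omega_\omega$ such that for every $\mathbf a\in\mathfrak S_{cc}$ there is $X\in\mathcal X$ with $\sum_X\mathbf a$ absolutely convergent; $\mathfrak{ss}_{ac}^\perp$ is the least cardinality of a family $\mathcal A\subseteq\mathfrak S_{cc}$ such that no $X\in[\omega]^\omega_\omega$ makes $\sum_X\mathbf a$ absolutely convergent for all $\mathbf a\in\mathcal A$. $\mathfrak b$ and $\mathfrak d$ are the bounding and dominating numbers. *)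

theory Defs
  imports "HOL-Analysis.Analysis" "HOL-Library.Infinite_Set"
begin

definition Sseq :: "(nat \<Rightarrow> rat) set" where
  "Sseq = {a. (\<lambda>i. real_of_rat (a i)) \<longlonglongrightarrow> 0}"

definition infcoinf :: "nat set set" where
  "infcoinf = {X. infinite X \<and> infinite (- X)}"

definition subser :: "(nat \<Rightarrow> rat) \<Rightarrow> nat set \<Rightarrow> nat \<Rightarrow> real" where
  "subser a X = (\<lambda>n. real_of_rat (a (enumerate X n)))"

definition conditional :: "(nat \<Rightarrow> real) \<Rightarrow> bool" where
  "conditional b \<longleftrightarrow>
     filterlim (\<lambda>N. \<Sum>n<N. max (b n) 0) at_top sequentially \<and>
     filterlim (\<lambda>N. \<Sum>n<N. min (b n) 0) at_bot sequentially"

definition cond_conv :: "(nat \<Rightarrow> real) \<Rightarrow> bool" where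
  "cond_conv b \<longleftrightarrow> summable b \<and> conditional b"

definition abs_conv :: "(nat \<Rightarrow> real) \<Rightarrow> bool" where
  "abs_conv b \<longleftrightarrow> summable b \<and> \<not> conditional b"

definition Scc :: "(nat \<Rightarrow> rat) set" where
  "Scc = {a \<in> Sseq. cond_conv (\<lambda>i. real_of_rat (a i))}"

definition ss_ac_family :: "nat set set \<Rightarrow> bool" where
  "ss_ac_family \<X> \<longleftrightarrow> \<X> \<subseteq> infcoinf \<and>
     (\<forall>a\<in>Scc. \<exists>X\<in>\<X>. abs_conv (subser a X))"

definition ss_ac_perp_family :: "(nat \<Rightarrow> rat) set \<Rightarrow> bool" where
  "ss_ac_perp_family \<A> \<longleftrightarrow> \<A> \<subseteq> Scc \<and>
     \<not> (\<exists>X\<in>infcoinf. \<forall>a\<in>\<A>. abs_conv (subser a X))"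

definition unbounded_family :: "(nat \<Rightarrow> nat) set \<Rightarrow> bool" where
  "unbounded_family F \<longleftrightarrow> \<not> (\<exists>g. \<forall>f\<in>F. eventually (\<lambda>n. f n \<le> g n) sequentially)"

definition dominating_family :: "(nat \<Rightarrow> nat) set \<Rightarrow> bool" where
  "dominating_family D \<longleftrightarrow> (\<forall>g. \<exists>f\<in>D. eventually (\<lambda>n. g n \<le> f n) sequentially)"

text \<open>The least cardinality (as a cardinal, i.e. a well-order relation) of a
  set satisfying P.\<close>
definition mincard :: "('a set \<Rightarrow> bool) \<Rightarrow> 'a rel" where
  "mincard P = (SOME r. \<exists>F. P F \<and> r = card_of F \<and> (\<forall>G. P G \<longrightarrow> (r, card_of G) \<in> ordLeq))"

definition ss_ac :: "nat set rel" where "ss_ac = mincard ss_ac_family"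
definition ss_ac_perp :: "(nat \<Rightarrow> rat) rel" where "ss_ac_perp = mincard ss_ac_perp_family"
definition bnum :: "(nat \<Rightarrow> nat) rel" where "bnum = mincard unbounded_family"
definition dnum :: "(nat \<Rightarrow> nat) rel" where "dnum = mincard dominating_family"

end

theory Submission
  imports Defs
begin


lemma bounded_of_not_at_top:
  fixes h :: "nat \<Rightarrow> real"
  assumes nn: "\<And>n. 0 \<le> h n" and nl: "\<not> filterlim (\<lambda>N. \<Sum>n<N. h n) at_top sequentially"
  shows "\<exists>S. \<forall>N. (\<Sum>n<N. h n) \<le> S"
proof (rule ccontr)
  assume "\<not> ?thesis"
  hence H: "\<And>S. \<exists>N. S < (\<Sum>n<N. h n)" by (auto simp: not_le)
  have "filterlim (\<lambda>N. \<Sum>n<N. h n) at_top sequentially"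
    unfolding filterlim_at_top
  proof
    fix Z :: real
    obtain N0 where N0: "Z < (\<Sum>n<N0. h n)" using H by blast
    have "\<forall>N\<ge>N0. Z \<le> (\<Sum>n<N. h n)"
    proof (intro allI impI)
      fix N assume "N0 \<le> N"
      hence "(\<Sum>n<N0. h n) \<le> (\<Sum>n<N. h n)" by (intro sum_mono2) (auto simp: nn)
      thus "Z \<le> (\<Sum>n<N. h n)" using N0 by linarith
    qed
    thus "eventually (\<lambda>N. Z \<le> (\<Sum>n<N. h n)) sequentially"
      unfolding eventually_sequentially by blast
  qed
  with nl show False by blast
qed

lemma at_top_of_not_summable:
  fixes h :: "nat \<Rightarrow> real"
  assumes nn: "\<And>n. 0 \<le> h n" and ns: "\<not> summable h"
  shows "filterlim (\<lambda>N. \<Sum>n<N. h n) at_top sequentially"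
proof (rule ccontr)
  assume "\<not> ?thesis"
  then obtain S where "\<forall>N. (\<Sum>n<N. h n) \<le> S" using bounded_of_not_at_top nn by blast
  hence "summable h" using summableI_nonneg_bounded[of h S] nn by blast
  with ns show False by blast
qed

lemma abs_eq_max: "\<bar>x::real\<bar> = 2 * max x 0 - x" by auto
lemma abs_eq_min: "\<bar>x::real\<bar> = x - 2 * min x 0" by auto

lemma sum_abs_max: "(\<Sum>n<N. \<bar>b n::real\<bar>) = 2 * (\<Sum>n<N. max (b n) 0) - (\<Sum>n<N. b n)"
  by (simp add: abs_eq_max sum_subtractf sum_distrib_left)
lemma sum_abs_min: "(\<Sum>n<N. \<bar>b n::real\<bar>) = (\<Sum>n<N. b n) - 2 * (\<Sum>n<N. min (b n) 0)"
  by (simp add: abs_eq_min sum_subtractf sum_distrib_left)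

lemma abs_conv_bound:
  assumes "abs_conv b" shows "\<exists>T. \<forall>N. (\<Sum>n<N. \<bar>b n\<bar>) \<le> T"
proof -
  from assms have s: "summable b" and nc: "\<not> conditional b" by (auto simp: abs_conv_def)
  have "Bseq (\<lambda>N. \<Sum>n<N. b n)" using s convergent_imp_Bseq summable_iff_convergent by blast
  then obtain B where B: "\<And>N. \<bar>\<Sum>n<N. b n\<bar> \<le> B" unfolding Bseq_def by auto
  from nc consider "\<not> filterlim (\<lambda>N. \<Sum>n<N. max (b n) 0) at_top sequentially"
    | "\<not> filterlim (\<lambda>N. \<Sum>n<N. min (b n) 0) at_bot sequentially"
    unfolding conditional_def by blast
  thus ?thesis
  proof cases
    case 1
    then obtain S where S: "\<And>N. (\<Sum>n<N. max (b n) 0) \<le> S"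
      using bounded_of_not_at_top[of "\<lambda>n. max (b n) 0"] by auto
    show ?thesis
    proof (intro exI allI)
      fix N
      show "(\<Sum>n<N. \<bar>b n\<bar>) \<le> 2 * S + B" unfolding sum_abs_max using S[of N] B[of N] by linarith
    qed
  next
    case 2
    hence "\<not> filterlim (\<lambda>N. - (\<Sum>n<N. min (b n) 0)) at_top sequentially"
      using filterlim_uminus_at_bot by blast
    hence "\<not> filterlim (\<lambda>N. (\<Sum>n<N. - min (b n) 0)) at_top sequentially"
      by (simp add: sum_negf)
    then obtain S where S: "\<And>N. (\<Sum>n<N. - min (b n) 0) \<le> S"
      using bounded_of_not_at_top[of "\<lambda>n. - min (b n) 0"] by auto
    show ?thesis
    proof (intro exI allI)
      fix N
      show "(\<Sum>n<N. \<bar>b n\<bar>) \<le> 2 * S + B" unfolding sum_abs_min using S[of N] B[of N]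
        by (simp add: sum_negf)
    qed
  qed
qed

lemma abs_conv_of_abs_summable:
  assumes "summable (\<lambda>n. \<bar>b n\<bar>)" shows "abs_conv b"
proof -
  have s: "summable b" using assms summable_rabs_cancel by blast
  have le: "\<And>N. (\<Sum>n<N. max (b n) 0) \<le> (\<Sum>n. \<bar>b n\<bar>)"
  proof -
    fix N
    have "(\<Sum>n<N. max (b n) 0) \<le> (\<Sum>n<N. \<bar>b n\<bar>)" by (intro sum_mono) auto
    also have "\<dots> \<le> (\<Sum>n. \<bar>b n\<bar>)" using assms by (intro sum_le_suminf) auto
    finally show "(\<Sum>n<N. max (b n) 0) \<le> (\<Sum>n. \<bar>b n\<bar>)" .
  qed
  have "\<not> filterlim (\<lambda>N. \<Sum>n<N. max (b n) 0) at_top sequentially"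
  proof
    assume "filterlim (\<lambda>N. \<Sum>n<N. max (b n) 0) at_top sequentially"
    hence "eventually (\<lambda>N. (\<Sum>n. \<bar>b n\<bar>) + 1 \<le> (\<Sum>n<N. max (b n) 0)) sequentially"
      unfolding filterlim_at_top by blast
    then obtain N where "(\<Sum>n. \<bar>b n\<bar>) + 1 \<le> (\<Sum>n<N. max (b n) 0)"
      unfolding eventually_sequentially by blast
    with le[of N] show False by linarith
  qed
  thus ?thesis using s unfolding abs_conv_def conditional_def by blast
qed



lemma strict_mono_same_range:
  fixes f g :: "nat \<Rightarrow> nat"
  assumes f: "strict_mono f" and g: "strict_mono g" and r: "range f = range g"
  shows "f n = g n"
proof (induction n rule: less_induct)
  case (less n)
  obtain m where m: "f n = g m" using r by (metis rangeI image_iff)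
  obtain m' where m': "g n = f m'" using r by (metis rangeI image_iff)
  have "\<not> m < n"
  proof
    assume "m < n"
    hence "f m < f n" using f by (simp add: strict_mono_less)
    moreover have "f m = g m" using less \<open>m < n\<close> by blast
    ultimately show False using m by simp
  qed
  hence "g n \<le> f n" using m g by (simp add: strict_mono_less_eq)
  have "\<not> m' < n"
  proof
    assume "m' < n"
    hence "g m' < g n" using g by (simp add: strict_mono_less)
    moreover have "f m' = g m'" using less \<open>m' < n\<close> by blast
    ultimately show False using m' by simp
  qed
  hence "f n \<le> g n" using m' f by (simp add: strict_mono_less_eq)
  with \<open>g n \<le> f n\<close> show ?case by simp
qed

lemma enumerate_range_strict_mono:
  fixes F :: "nat \<Rightarrow> nat"
  assumes "strict_mono F" shows "enumerate (range F) n = F n"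
proof -
  have inf: "infinite (range F)" using assms range_inj_infinite strict_mono_imp_inj_on by blast
  show ?thesis
    by (rule strict_mono_same_range[OF strict_mono_enumerate[OF inf] assms range_enumerate[OF inf]])
qed

definition Fsp :: "(nat \<Rightarrow> nat) \<Rightarrow> nat \<Rightarrow> nat" where
  "Fsp f n = 2 * ((\<Sum>k\<le>n. f k) + n)"

definition Xf :: "(nat \<Rightarrow> nat) \<Rightarrow> nat set" where
  "Xf f = range (Fsp f)"

definition ga :: "(nat \<Rightarrow> rat) \<Rightarrow> nat \<Rightarrow> nat" where
  "ga a n = (LEAST m. \<forall>i\<ge>m. \<bar>real_of_rat (a i)\<bar> \<le> (1/2)^n)"

lemma Fsp_strict_mono: "strict_mono (Fsp f)"
  unfolding strict_mono_Suc_iff Fsp_def by simp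

lemma Fsp_ge: "f n \<le> Fsp f n"
proof -
  have "f n \<le> (\<Sum>k\<le>n. f k)" by (rule member_le_sum) auto
  thus ?thesis unfolding Fsp_def by simp
qed

lemma Xf_infcoinf: "Xf f \<in> infcoinf"
proof -
  have inf: "infinite (Xf f)" unfolding Xf_def
    using Fsp_strict_mono range_inj_infinite strict_mono_imp_inj_on by blast
  have "range (\<lambda>n::nat. 2 * n + 1) \<subseteq> - Xf f"
    unfolding Xf_def Fsp_def by auto presburger
  moreover have "infinite (range (\<lambda>n::nat. 2 * n + 1))"
    by (rule range_inj_infinite) (auto simp: inj_on_def)
  ultimately have "infinite (- Xf f)" using infinite_super by blast
  with inf show ?thesis unfolding infcoinf_def by blast
qed

lemma ga_prop:
  assumes "a \<in> Sseq" and "ga a n \<le> i"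
  shows "\<bar>real_of_rat (a i)\<bar> \<le> (1/2)^n"
proof -
  have "(\<lambda>i. real_of_rat (a i)) \<longlonglongrightarrow> 0" using assms(1) unfolding Sseq_def by simp
  from LIMSEQ_D[OF this, of "(1/2)^n"] obtain m where "\<forall>i\<ge>m. norm (real_of_rat (a i) - 0) < (1/2)^n"
    by auto
  hence ex: "\<exists>m. \<forall>i\<ge>m. \<bar>real_of_rat (a i)\<bar> \<le> (1/2)^n" by (auto intro: less_imp_le)
  show ?thesis using LeastI_ex[OF ex] assms(2) unfolding ga_def by blast
qed

lemma L1:
  assumes "a \<in> Sseq" and ev: "eventually (\<lambda>n. ga a n \<le> f n) sequentially"
  shows "abs_conv (subser a (Xf f))"
proof (rule abs_conv_of_abs_summable)
  have e: "enumerate (Xf f) n = Fsp f n" for n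
    unfolding Xf_def by (rule enumerate_range_strict_mono[OF Fsp_strict_mono])
  have "eventually (\<lambda>n. norm \<bar>subser a (Xf f) n\<bar> \<le> (1/2)^n) sequentially"
    using ev
  proof (rule eventually_mono)
    fix n assume "ga a n \<le> f n"
    hence "ga a n \<le> Fsp f n" using Fsp_ge[of f n] by linarith
    thus "norm \<bar>subser a (Xf f) n\<bar> \<le> (1/2)^n"
      using ga_prop[OF assms(1)] unfolding subser_def e by simp
  qed
  moreover have "summable (\<lambda>n. (1/2::real)^n)" by (rule summable_geometric) simp
  ultimately show "summable (\<lambda>n. \<bar>subser a (Xf f) n\<bar>)" by (rule summable_comparison_test_ev)
qed



lemma cond_conv_of:
  fixes b :: "nat \<Rightarrow> real"
  assumes s: "summable b" and ns: "\<not> summable (\<lambda>n. \<bar>b n\<bar>)"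
  shows "cond_conv b"
proof -
  have A: "filterlim (\<lambda>N. \<Sum>n<N. \<bar>b n\<bar>) at_top sequentially"
    by (rule at_top_of_not_summable) (use ns in auto)
  have B: "(\<lambda>N. \<Sum>n<N. b n) \<longlonglongrightarrow> suminf b" using s summable_LIMSEQ by blast
  have B': "(\<lambda>N. - (\<Sum>n<N. b n)) \<longlonglongrightarrow> - suminf b" using B by (rule tendsto_minus)
  have 1: "filterlim (\<lambda>N. (\<Sum>n<N. b n) + (\<Sum>n<N. \<bar>b n\<bar>)) at_top sequentially"
    by (rule filterlim_tendsto_add_at_top[OF B A])
  have 2: "filterlim (\<lambda>N. - (\<Sum>n<N. b n) + (\<Sum>n<N. \<bar>b n\<bar>)) at_top sequentially"
    by (rule filterlim_tendsto_add_at_top[OF B' A])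
  have P: "filterlim (\<lambda>N. \<Sum>n<N. max (b n) 0) at_top sequentially"
    unfolding filterlim_at_top
  proof
    fix Z :: real
    have "eventually (\<lambda>N. 2 * Z \<le> (\<Sum>n<N. b n) + (\<Sum>n<N. \<bar>b n\<bar>)) sequentially"
      using 1 unfolding filterlim_at_top by blast
    thus "eventually (\<lambda>N. Z \<le> (\<Sum>n<N. max (b n) 0)) sequentially"
      by (rule eventually_mono) (simp add: sum_abs_max)
  qed
  have Q: "filterlim (\<lambda>N. - (\<Sum>n<N. min (b n) 0)) at_top sequentially"
    unfolding filterlim_at_top
  proof
    fix Z :: real
    have "eventually (\<lambda>N. 2 * Z \<le> - (\<Sum>n<N. b n) + (\<Sum>n<N. \<bar>b n\<bar>)) sequentially"
      using 2 unfolding filterlim_at_top by blast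
    thus "eventually (\<lambda>N. Z \<le> - (\<Sum>n<N. min (b n) 0)) sequentially"
      by (rule eventually_mono) (simp add: sum_abs_min)
  qed
  hence "filterlim (\<lambda>N. \<Sum>n<N. min (b n) 0) at_bot sequentially"
    using filterlim_uminus_at_bot by blast
  with P s show ?thesis unfolding cond_conv_def conditional_def by blast
qed

definition Gg :: "(nat \<Rightarrow> nat) \<Rightarrow> nat \<Rightarrow> nat" where
  "Gg g n = (\<Sum>k\<le>n. g k) + n"
definition kg :: "(nat \<Rightarrow> nat) \<Rightarrow> nat \<Rightarrow> nat" where
  "kg g i = (LEAST k. i < Gg g k)"
definition cg :: "(nat \<Rightarrow> nat) \<Rightarrow> nat \<Rightarrow> real" where
  "cg g i = 1 / (real (kg g i) + 1)"
definition ag :: "(nat \<Rightarrow> nat) \<Rightarrow> nat \<Rightarrow> rat" where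
  "ag g i = (-1)^i / (of_nat (kg g i) + 1)"
definition fX :: "nat set \<Rightarrow> nat \<Rightarrow> nat" where
  "fX X n = enumerate X ((n+1)*(n+1))"

lemma Gg_strict_mono: "strict_mono (Gg g)"
  unfolding strict_mono_Suc_iff Gg_def by simp

lemma Gg_ge: "g n \<le> Gg g n"
proof -
  have "g n \<le> (\<Sum>k\<le>n. g k)" by (rule member_le_sum) auto
  thus ?thesis unfolding Gg_def by simp
qed

lemma Gg_ge': "n \<le> Gg g n" unfolding Gg_def by simp

lemma kg_le: "i < Gg g n \<Longrightarrow> kg g i \<le> n"
  unfolding kg_def by (rule Least_le)

lemma kg_prop: "i < Gg g (kg g i)"
proof -
  have "i < Gg g (Suc i)" using Gg_ge'[of "Suc i" g] by simp
  thus ?thesis unfolding kg_def by (rule LeastI)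
qed

lemma kg_mono: "i \<le> j \<Longrightarrow> kg g i \<le> kg g j"
  using kg_prop[of j g] by (intro kg_le) simp

lemma kg_bound: "kg g i \<le> Suc i"
  using Gg_ge'[of "Suc i" g] by (intro kg_le) simp

lemma kg_large: "Gg g K \<le> i \<Longrightarrow> K < kg g i"
proof (rule ccontr)
  assume "Gg g K \<le> i" "\<not> K < kg g i"
  hence "Gg g (kg g i) \<le> Gg g K" using Gg_strict_mono strict_mono_less_eq by (metis not_less)
  with kg_prop[of i g] \<open>Gg g K \<le> i\<close> show False by simp
qed

lemma cg_pos: "0 \<le> cg g i" unfolding cg_def by simp

lemma cg_anti: "i \<le> j \<Longrightarrow> cg g j \<le> cg g i"
  unfolding cg_def using kg_mono[of i j g] by (simp add: frac_le)

lemma cg_lower: "i < Gg g n \<Longrightarrow> 1 / (real n + 1) \<le> cg g i"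
  unfolding cg_def using kg_le[of i g n] by (simp add: frac_le)

lemma cg_zero: "cg g \<longlonglongrightarrow> 0"
proof (rule LIMSEQ_I)
  fix r :: real assume "0 < r"
  then obtain K where K: "inverse (real (Suc K)) < r" using reals_Archimedean by blast
  have "\<forall>i\<ge>Gg g K. norm (cg g i - 0) < r"
  proof (intro allI impI)
    fix i assume "Gg g K \<le> i"
    hence "K < kg g i" by (rule kg_large)
    hence "cg g i \<le> inverse (real (Suc K))" unfolding cg_def
      by (simp add: inverse_eq_divide frac_le)
    thus "norm (cg g i - 0) < r" using K cg_pos[of g i] by simp
  qed
  thus "\<exists>no. \<forall>i\<ge>no. norm (cg g i - 0) < r" by blast
qed

lemma ag_real: "real_of_rat (ag g i) = (-1)^i * cg g i"
  unfolding ag_def cg_def by (simp add: of_rat_divide of_rat_power of_rat_add)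

lemma cg_not_summable: "\<not> summable (cg g)"
proof
  assume "summable (cg g)"
  hence "summable (\<lambda>n. inverse (real (n + 2)))"
  proof (rule summable_comparison_test[rotated], intro exI allI impI)
    fix n :: nat
    have "1 / (real (Suc n) + 1) \<le> cg g n"
      using kg_bound[of g n] unfolding cg_def by (simp add: frac_le)
    thus "norm (inverse (real (n + 2))) \<le> cg g n" by (simp add: inverse_eq_divide add_ac)
  qed
  hence "summable (\<lambda>n. inverse (real n))" using summable_iff_shift[of "\<lambda>n. inverse (real n)" 2] by simp
  with not_summable_harmonic show False by blast
qed

lemma ag_Scc: "ag g \<in> Scc"
proof -
  have s: "summable (\<lambda>i. (-1)^i * cg g i)"
    by (rule summable_Leibniz'(1)[OF cg_zero cg_pos cg_anti]) simp
  have ns: "\<not> summable (\<lambda>i. \<bar>(-1)^i * cg g i\<bar>)"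
    using cg_not_summable by (simp add: abs_mult cg_pos abs_of_nonneg)
  have cc: "cond_conv (\<lambda>i. real_of_rat (ag g i))"
    unfolding ag_real by (rule cond_conv_of[OF s ns])
  have "(\<lambda>i. real_of_rat (ag g i)) \<longlonglongrightarrow> 0"
    unfolding ag_real using s by (rule summable_LIMSEQ_zero)
  with cc show ?thesis unfolding Scc_def Sseq_def by blast
qed

lemma L2:
  assumes inf: "infinite X" and ac: "abs_conv (subser (ag g) X)"
  shows "eventually (\<lambda>n. g n \<le> fX X n) sequentially"
proof -
  let ?e = "enumerate X"
  obtain T where T: "\<And>N. (\<Sum>n<N. \<bar>subser (ag g) X n\<bar>) \<le> T" using abs_conv_bound[OF ac] by blast
  have absv: "\<bar>subser (ag g) X n\<bar> = cg g (?e n)" for n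
    unfolding subser_def ag_real by (simp add: abs_mult cg_pos abs_of_nonneg)
  have key: "real (Suc m) * cg g (?e m) \<le> T" for m
  proof -
    have "real (card {..<Suc m}) * cg g (?e m) \<le> (\<Sum>n<Suc m. cg g (?e n))"
    proof (rule sum_bounded_below)
      fix n assume "n \<in> {..<Suc m}"
      hence "?e n \<le> ?e m" using inf by simp
      thus "cg g (?e m) \<le> cg g (?e n)" by (rule cg_anti)
    qed
    also have "\<dots> \<le> T" using T[of "Suc m"] by (simp add: absv)
    finally show ?thesis by simp
  qed
  obtain n0 :: nat where n0: "T < real n0" using reals_Archimedean2 by blast
  have "\<forall>n\<ge>n0. g n \<le> fX X n"
  proof (intro allI impI)
    fix n assume "n0 \<le> n"
    show "g n \<le> fX X n"
    proof (rule ccontr)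
      assume "\<not> g n \<le> fX X n"
      hence "?e ((n+1)*(n+1)) < Gg g n" using Gg_ge[of g n] unfolding fX_def by simp
      hence c: "1 / (real n + 1) \<le> cg g (?e ((n+1)*(n+1)))" by (rule cg_lower)
      define x where "x = real n + 1"
      have xpos: "0 < x" unfolding x_def by simp
      have "real (Suc ((n+1)*(n+1))) * (1 / (real n + 1)) \<le> T"
        using key[of "(n+1)*(n+1)"] c by (meson dual_order.trans mult_left_mono of_nat_0_le_iff)
      moreover have "real (Suc ((n+1)*(n+1))) * (1 / (real n + 1)) = (x * x + 1) / x"
        unfolding x_def by (simp add: field_simps)
      ultimately have "(x * x + 1) / x \<le> T" by simp
      moreover have "x < (x * x + 1) / x" using xpos by (simp add: field_simps)
      moreover have "T < x" using n0 \<open>n0 \<le> n\<close> unfolding x_def by simp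
      ultimately show False by linarith
    qed
  qed
  thus ?thesis unfolding eventually_sequentially by blast
qed



lemma mincard_ex:
  assumes "\<exists>F. P F"
  shows "\<exists>F. P F \<and> mincard P = card_of F \<and> (\<forall>G. P G \<longrightarrow> (mincard P, card_of G) \<in> ordLeq)"
proof -
  let ?R = "card_of ` {F. P F}"
  have NE: "?R \<noteq> {}" using assms by blast
  have WO: "\<forall>r\<in>?R. Well_order r" by (auto intro: card_of_Well_order)
  from exists_minim_Well_order[OF NE WO] obtain r where
    r: "r \<in> ?R" "\<forall>r'\<in>?R. (r, r') \<in> ordLeq" by blast
  from r(1) obtain F where F: "P F" "r = card_of F" by blast
  have ex: "\<exists>r. \<exists>F. P F \<and> r = card_of F \<and> (\<forall>G. P G \<longrightarrow> (r, card_of G) \<in> ordLeq)"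
  proof (intro exI conjI allI impI)
    show "P F" by (rule F(1))
    show "r = card_of F" by (rule F(2))
    fix G assume "P G"
    hence "card_of G \<in> ?R" by blast
    thus "(r, card_of G) \<in> ordLeq" using r(2) by blast
  qed
  show ?thesis unfolding mincard_def by (rule someI_ex[OF ex])
qed


lemma ex_dom: "\<exists>D. dominating_family D"
  unfolding dominating_family_def
proof (rule exI[of _ UNIV], rule allI)
  fix g :: "nat \<Rightarrow> nat"
  have "eventually (\<lambda>n. g n \<le> g n) sequentially" by simp
  thus "\<exists>f\<in>UNIV. eventually (\<lambda>n. g n \<le> f n) sequentially" by blast
qed

lemma ex_unb: "\<exists>F. unbounded_family F"
proof -
  have "unbounded_family UNIV"
    unfolding unbounded_family_def
  proof
    assume "\<exists>g. \<forall>f\<in>(UNIV :: (nat \<Rightarrow> nat) set). eventually (\<lambda>n. f n \<le> g n) sequentially"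
    then obtain g :: "nat \<Rightarrow> nat" where g: "\<forall>f\<in>(UNIV :: (nat \<Rightarrow> nat) set). eventually (\<lambda>n. f n \<le> g n) sequentially"
      by blast
    have "eventually (\<lambda>n. Suc (g n) \<le> g n) sequentially"
      using bspec[OF g, of "\<lambda>n. Suc (g n)"] by simp
    then obtain N where "\<And>n. N \<le> n \<Longrightarrow> Suc (g n) \<le> g n" unfolding eventually_sequentially by blast
    from this[of N] show False by simp
  qed
  thus ?thesis by blast
qed

lemma Scc_Sseq: "a \<in> Scc \<Longrightarrow> a \<in> Sseq" unfolding Scc_def by blast

lemma fam_from_dom:
  assumes "dominating_family D" shows "ss_ac_family (Xf ` D)"
  unfolding ss_ac_family_def
proof (intro conjI ballI)
  show "Xf ` D \<subseteq> infcoinf" using Xf_infcoinf by blast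
  fix a assume "a \<in> Scc"
  obtain f where "f \<in> D" and "eventually (\<lambda>n. ga a n \<le> f n) sequentially"
    using assms unfolding dominating_family_def by blast
  thus "\<exists>X\<in>Xf ` D. abs_conv (subser a X)" using L1[OF Scc_Sseq[OF \<open>a \<in> Scc\<close>]] by blast
qed

lemma dom_from_fam:
  assumes "ss_ac_family XX" shows "dominating_family (fX ` XX)"
  unfolding dominating_family_def
proof
  fix g
  obtain X where X: "X \<in> XX" "abs_conv (subser (ag g) X)"
    using assms ag_Scc unfolding ss_ac_family_def by blast
  have "infinite X" using X(1) assms unfolding ss_ac_family_def infcoinf_def by blast
  from L2[OF this X(2)] X(1) show "\<exists>f\<in>fX ` XX. eventually (\<lambda>n. g n \<le> f n) sequentially" by blast
qed

lemma perp_from_unb: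
  assumes "unbounded_family F" shows "ss_ac_perp_family (ag ` F)"
  unfolding ss_ac_perp_family_def
proof (intro conjI notI)
  show "ag ` F \<subseteq> Scc" using ag_Scc by blast
  assume "\<exists>X\<in>infcoinf. \<forall>a\<in>ag ` F. abs_conv (subser a X)"
  then obtain X where X: "X \<in> infcoinf" "\<And>g. g \<in> F \<Longrightarrow> abs_conv (subser (ag g) X)" by blast
  have "infinite X" using X(1) unfolding infcoinf_def by blast
  hence "\<forall>g\<in>F. eventually (\<lambda>n. g n \<le> fX X n) sequentially" using L2 X(2) by simp
  with assms show False unfolding unbounded_family_def by blast
qed

lemma unb_from_perp:
  assumes "ss_ac_perp_family A" shows "unbounded_family (ga ` A)"
  unfolding unbounded_family_def
proof
  assume "\<exists>f. \<forall>h\<in>ga ` A. eventually (\<lambda>n. h n \<le> f n) sequentially"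
  then obtain f where f: "\<And>a. a \<in> A \<Longrightarrow> eventually (\<lambda>n. ga a n \<le> f n) sequentially" by blast
  have "\<forall>a\<in>A. abs_conv (subser a (Xf f))"
  proof
    fix a assume "a \<in> A"
    hence "a \<in> Sseq" using assms Scc_Sseq unfolding ss_ac_perp_family_def by blast
    thus "abs_conv (subser a (Xf f))" using L1 f \<open>a \<in> A\<close> by blast
  qed
  with Xf_infcoinf[of f] assms show False unfolding ss_ac_perp_family_def by blast
qed



theorem mainTheorem6:
  shows "(ss_ac, dnum) \<in> ordIso \<and> (ss_ac_perp, bnum) \<in> ordIso"
proof -
  obtain D0 where D0: "dominating_family D0" "dnum = card_of D0"
    and Dmin: "\<And>G. dominating_family G \<Longrightarrow> (dnum, card_of G) \<in> ordLeq"
    using mincard_ex[OF ex_dom, folded dnum_def] by blast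
  have exX: "\<exists>XX. ss_ac_family XX" using fam_from_dom[OF D0(1)] by blast
  obtain X0 where X0: "ss_ac_family X0" "ss_ac = card_of X0"
    and Xmin: "\<And>G. ss_ac_family G \<Longrightarrow> (ss_ac, card_of G) \<in> ordLeq"
    using mincard_ex[OF exX, folded ss_ac_def] by blast
  obtain F0 where F0: "unbounded_family F0" "bnum = card_of F0"
    and Fmin: "\<And>G. unbounded_family G \<Longrightarrow> (bnum, card_of G) \<in> ordLeq"
    using mincard_ex[OF ex_unb, folded bnum_def] by blast
  have exA: "\<exists>A. ss_ac_perp_family A" using perp_from_unb[OF F0(1)] by blast
  obtain A0 where A0: "ss_ac_perp_family A0" "ss_ac_perp = card_of A0"
    and Amin: "\<And>G. ss_ac_perp_family G \<Longrightarrow> (ss_ac_perp, card_of G) \<in> ordLeq"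
    using mincard_ex[OF exA, folded ss_ac_perp_def] by blast
  have 1: "(ss_ac, dnum) \<in> ordLeq"
    unfolding D0(2) by (rule ordLeq_transitive[OF Xmin[OF fam_from_dom[OF D0(1)]] card_of_image])
  have 2: "(dnum, ss_ac) \<in> ordLeq"
    unfolding X0(2) by (rule ordLeq_transitive[OF Dmin[OF dom_from_fam[OF X0(1)]] card_of_image])
  have 3: "(ss_ac_perp, bnum) \<in> ordLeq"
    unfolding F0(2) by (rule ordLeq_transitive[OF Amin[OF perp_from_unb[OF F0(1)]] card_of_image])
  have 4: "(bnum, ss_ac_perp) \<in> ordLeq"
    unfolding A0(2) by (rule ordLeq_transitive[OF Fmin[OF unb_from_perp[OF A0(1)]] card_of_image])
  have "(ss_ac, dnum) \<in> ordIso" using 1 2 ordIso_iff_ordLeq by blast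
  moreover have "(ss_ac_perp, bnum) \<in> ordIso" using 3 4 ordIso_iff_ordLeq by blast
  ultimately show ?thesis by (rule conjI)
qed

end
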